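(* The map $\phi:\mathbf G\times\mathcal T\to\mathcal T$ defined, for $X=(A,\beta,B,Q_1,\dots,Q_n)\in\mathbf G$ and $\xi=(P_B,v_B,b_B,T,p_1,\dots,p_n)\in\mathcal T$, by $$\phi(X,\xi):=\Big(P_BP_A,\; v_B+R_Bv_A,\; b_B+\beta,\; P_A^{-1}TB,\; \big(P_BTB\,Q_i^{-1}\,T^{-1}P_B^{-1}(p_i)\big)_{i=1,\dots,n}\Big)$$ is a well-defined transitive right group action of $\mathbf G$ on $\mathcal T$.
   Context: Notation: $\mathrm{SE}(3)$ is the set of pairs $P=(R_P,x_P)$, $R_P\in\mathrm{SO}(3)$, $x_P\in\mathbb R^3$, product $(R_1,x_1)(R_2,x_2)=(R_1R_2,x_1+R_1x_2)$, acting on points by $P(p)=R_Pp+x_P$. $\mathrm{SE}_2(3)$ is the set of triples $A=(R_A,x_A,v_A)$, $R_A\in\mathrm{SO}(3)$, $x_A,v_A\in\mathbb R^3$, product $(R_1,x_1,v_1)(R_2,x_2,v_2)=(R_1R_2,x_1+R_1x_2,v_1+R_1v_2)$; write $P_A:=(R_A,x_A)\in\mathrm{SE}(3)$. $\mathrm{SOT}(3)$ is the group of pairs $Q=(R_Q,c_Q)$, $R_Q\in\mathrm{SO}(3)$, $c_Q>0$, product $(R_1R_2,c_1c_2)$, acting on points by $Q(p):=c_QR_Qp$ (so $Q^{-1}(p)=c_Q^{-1}R_Q^\top p$). Compositions such as $P_BTBQ_i^{-1}T^{-1}P_B^{-1}(p_i)$ mean successive application of these point actions. $\mathbf G:=\mathrm{SE}_2(3)\times\mathbb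 R^6\times\mathrm{SE}(3)\times\mathrm{SOT}(3)^n$ is the direct product group ($\mathbb R^6$ under addition), with elements $X=(A,\beta,B,Q_1,\dots,Q_n)$. State space: a state is $\xi=(P_B,v_B,b_B,T,p_1,\dots,p_n)$ with $P_B=(R_B,x_B)\in\mathrm{SE}(3)$, $v_B\in\mathbb R^3$, $b_B\in\mathbb R^6$, $T\in\mathrm{SE}(3)$, $p_i\in\mathbb R^3$; the total space $\mathcal T$ is the set of such states with $(P_BT)^{-1}(p_i)\ne0$ for all $i$. A right group action satisfies $\phi(XY,\xi)=\phi(Y,\phi(X,\xi))$, $\phi(\mathrm{id},\xi)=\xi$; transitive means every state can be mapped to every other. *)

theory Defs
  imports "HOL-Analysis.Analysis"
begin

type_synonym vec3 = "real ^ 3"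
type_synonym mat3 = "real ^ 3 ^ 3"

definition SO3 :: "mat3 set" where
  "SO3 = {R. orthogonal_matrix R \<and> det R = 1}"

type_synonym se3 = "mat3 \<times> vec3"

definition is_se3 :: "se3 \<Rightarrow> bool" where
  "is_se3 P \<longleftrightarrow> fst P \<in> SO3"

definition se3_mul :: "se3 \<Rightarrow> se3 \<Rightarrow> se3" where
  "se3_mul P1 P2 = (fst P1 ** fst P2, snd P1 + fst P1 *v snd P2)"

definition se3_id :: se3 where
  "se3_id = (mat 1, 0)"

definition se3_inv :: "se3 \<Rightarrow> se3" where
  "se3_inv P = (transpose (fst P), - (transpose (fst P) *v snd P))"

definition se3_act :: "se3 \<Rightarrow> vec3 \<Rightarrow> vec3" where
  "se3_act P p = fst P *v p + snd P"

type_synonym se23 = "mat3 \<times> vec3 \<times> vec3"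

definition is_se23 :: "se23 \<Rightarrow> bool" where
  "is_se23 A \<longleftrightarrow> fst A \<in> SO3"

definition se23_mul :: "se23 \<Rightarrow> se23 \<Rightarrow> se23" where
  "se23_mul A1 A2 = (case A1 of (R1, x1, v1) \<Rightarrow> case A2 of (R2, x2, v2) \<Rightarrow>
      (R1 ** R2, x1 + R1 *v x2, v1 + R1 *v v2))"

definition se23_id :: se23 where
  "se23_id = (mat 1, 0, 0)"

definition se23_P :: "se23 \<Rightarrow> se3" where
  "se23_P A = (case A of (R, x, v) \<Rightarrow> (R, x))"

definition se23_v :: "se23 \<Rightarrow> vec3" where
  "se23_v A = (case A of (R, x, v) \<Rightarrow> v)"

type_synonym sot3 = "mat3 \<times> real"

definition is_sot3 :: "sot3 \<Rightarrow> bool" where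
  "is_sot3 Q \<longleftrightarrow> fst Q \<in> SO3 \<and> snd Q > 0"

definition sot3_mul :: "sot3 \<Rightarrow> sot3 \<Rightarrow> sot3" where
  "sot3_mul Q1 Q2 = (fst Q1 ** fst Q2, snd Q1 * snd Q2)"

definition sot3_id :: sot3 where
  "sot3_id = (mat 1, 1)"

definition sot3_act :: "sot3 \<Rightarrow> vec3 \<Rightarrow> vec3" where
  "sot3_act Q p = snd Q *\<^sub>R (fst Q *v p)"

definition sot3_inv_act :: "sot3 \<Rightarrow> vec3 \<Rightarrow> vec3" where
  "sot3_inv_act Q p = inverse (snd Q) *\<^sub>R (transpose (fst Q) *v p)"

text \<open>Landmarks are indexed by a finite type 'n (with CARD('n) = n).\<close>

type_synonym 'n grp = "se23 \<times> (real ^ 6) \<times> se3 \<times> ('n \<Rightarrow> sot3)"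

definition in_G :: "'n::finite grp \<Rightarrow> bool" where
  "in_G X = (case X of (A, \<beta>, B, Q) \<Rightarrow>
      is_se23 A \<and> is_se3 B \<and> (\<forall>i. is_sot3 (Q i)))"

definition G_mul :: "'n::finite grp \<Rightarrow> 'n grp \<Rightarrow> 'n grp" where
  "G_mul X Y = (case X of (A1, \<beta>1, B1, Q1) \<Rightarrow> case Y of (A2, \<beta>2, B2, Q2) \<Rightarrow>
      (se23_mul A1 A2, \<beta>1 + \<beta>2, se3_mul B1 B2, (\<lambda>i. sot3_mul (Q1 i) (Q2 i))))"

definition G_id :: "'n::finite grp" where
  "G_id = (se23_id, 0, se3_id, (\<lambda>i. sot3_id))"

type_synonym 'n state = "se3 \<times> vec3 \<times> (real ^ 6) \<times> se3 \<times> ('n \<Rightarrow> vec3)"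

definition in_T :: "'n::finite state \<Rightarrow> bool" where
  "in_T \<xi> = (case \<xi> of (PB, vB, bB, T, p) \<Rightarrow>
      is_se3 PB \<and> is_se3 T \<and>
      (\<forall>i. se3_act (se3_inv (se3_mul PB T)) (p i) \<noteq> 0))"

definition phi :: "'n::finite grp \<Rightarrow> 'n state \<Rightarrow> 'n state" where
  "phi X \<xi> = (case X of (A, \<beta>, B, Q) \<Rightarrow> case \<xi> of (PB, vB, bB, T, p) \<Rightarrow>
      (se3_mul PB (se23_P A),
       vB + fst PB *v se23_v A,
       bB + \<beta>,
       se3_mul (se3_mul (se3_inv (se23_P A)) T) B,
       (\<lambda>i. se3_act PB (se3_act T (se3_act B (sot3_inv_act (Q i)
              (se3_act (se3_inv T) (se3_act (se3_inv PB) (p i)))))))))"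

end

theory Submission
  imports Defs
begin

declare transpose_matrix_vector [simp del]

lemma mv_neg: "(A::mat3) *v (- x) = - (A *v x)"
  by (simp add: matrix_vector_mult_def vec_eq_iff sum_negf)

lemma SO3_D: "R \<in> SO3 \<Longrightarrow> transpose R ** R = mat 1 \<and> R ** transpose R = mat 1"
  by (simp add: SO3_def orthogonal_matrix_def)

lemma SO3_mul: "R \<in> SO3 \<Longrightarrow> S \<in> SO3 \<Longrightarrow> R ** S \<in> SO3"
  by (simp add: SO3_def orthogonal_matrix_mul det_mul)

lemma SO3_tr: "R \<in> SO3 \<Longrightarrow> transpose R \<in> SO3"
  by (simp add: SO3_def det_transpose)

lemma act_mul: "se3_act (se3_mul P Q) p = se3_act P (se3_act Q p)"
  by (simp add: se3_act_def se3_mul_def matrix_vector_mul_assoc[symmetric] algebra_simps)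

lemma mul_assoc3: "se3_mul (se3_mul P Q) S = se3_mul P (se3_mul Q S)"
  by (simp add: se3_mul_def matrix_mul_assoc matrix_vector_mul_assoc[symmetric] algebra_simps)

lemma act_inv_l: "is_se3 P \<Longrightarrow> se3_act (se3_inv P) (se3_act P p) = p"
  using SO3_D[of "fst P"]
  by (simp add: is_se3_def se3_act_def se3_inv_def matrix_vector_mul_assoc algebra_simps mv_neg)

lemma act_inv_r: "is_se3 P \<Longrightarrow> se3_act P (se3_act (se3_inv P) p) = p"
  using SO3_D[of "fst P"]
  by (simp add: is_se3_def se3_act_def se3_inv_def matrix_vector_mul_assoc algebra_simps mv_neg)

lemma inv_mul: "is_se3 P \<Longrightarrow> se3_inv (se3_mul P Q) = se3_mul (se3_inv Q) (se3_inv P)"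
  using SO3_D[of "fst P"]
  by (simp add: is_se3_def se3_mul_def se3_inv_def matrix_transpose_mul matrix_vector_mul_assoc
      matrix_mul_assoc[symmetric] algebra_simps mv_neg)

lemma mul_inv_r: "is_se3 P \<Longrightarrow> se3_mul P (se3_mul (se3_inv P) Q) = Q"
  using SO3_D[of "fst P"] matrix_mul_assoc[of "fst P" "transpose (fst P)" "fst Q", symmetric]
  by (simp add: is_se3_def se3_mul_def se3_inv_def matrix_vector_mul_assoc
      matrix_mul_assoc[symmetric] algebra_simps mv_neg)

lemma mul_inv_l: "is_se3 P \<Longrightarrow> se3_mul (se3_inv P) (se3_mul P Q) = Q"
  using SO3_D[of "fst P"] matrix_mul_assoc[of "transpose (fst P)" "fst P" "fst Q", symmetric]
  by (simp add: is_se3_def se3_mul_def se3_inv_def matrix_vector_mul_assoc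
      matrix_mul_assoc[symmetric] algebra_simps mv_neg)

lemma is_se3_mul: "is_se3 P \<Longrightarrow> is_se3 Q \<Longrightarrow> is_se3 (se3_mul P Q)"
  by (simp add: is_se3_def se3_mul_def SO3_mul)

lemma is_se3_inv: "is_se3 P \<Longrightarrow> is_se3 (se3_inv P)"
  by (simp add: is_se3_def se3_inv_def SO3_tr)

lemma mul_id_r: "se3_mul P se3_id = P"
  by (simp add: se3_mul_def se3_id_def)

lemma mul_id_l: "se3_mul se3_id P = P"
  by (simp add: se3_mul_def se3_id_def)

lemma inv_id: "se3_inv se3_id = se3_id"
  by (simp add: se3_inv_def se3_id_def)

lemma sot_inv_nz: "is_sot3 Q \<Longrightarrow> y \<noteq> 0 \<Longrightarrow> sot3_inv_act Q y \<noteq> 0"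
proof
  assume a: "is_sot3 Q" "y \<noteq> 0" "sot3_inv_act Q y = 0"
  then have "transpose (fst Q) *v y = 0" by (simp add: sot3_inv_act_def is_sot3_def)
  then have "fst Q *v (transpose (fst Q) *v y) = 0" by simp
  then show False using a SO3_D[of "fst Q"] by (simp add: is_sot3_def matrix_vector_mul_assoc)
qed

lemma sot_inv_mul: "sot3_inv_act (sot3_mul Q1 Q2) y = sot3_inv_act Q2 (sot3_inv_act Q1 y)"
  by (simp add: sot3_inv_act_def sot3_mul_def matrix_transpose_mul matrix_vector_mul_assoc[symmetric]
      algebra_simps)

lemma sot_exists:
  assumes "y \<noteq> 0" "w \<noteq> 0"
  shows "\<exists>Q. is_sot3 Q \<and> sot3_inv_act Q y = w"
proof -
  define c where "c = norm y / norm w"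
  have c: "c > 0" using assms by (simp add: c_def)
  have "norm (c *\<^sub>R w) = norm y" using assms by (simp add: c_def)
  then obtain f where f: "orthogonal_transformation f" "det (matrix f) = 1" "f (c *\<^sub>R w) = y"
    using rotation_exists[of "c *\<^sub>R w" y] by auto
  define R where "R = matrix f"
  have R: "R \<in> SO3" using f by (simp add: SO3_def R_def orthogonal_transformation_matrix)
  have "R *v (c *\<^sub>R w) = y"
    using f by (simp add: R_def matrix_works orthogonal_transformation_linear)
  then have "transpose R *v y = c *\<^sub>R w"
    using SO3_D[OF R] by (metis matrix_vector_mul_assoc matrix_vector_mul_lid)
  then have "sot3_inv_act (R, c) y = w" using c by (simp add: sot3_inv_act_def)
  moreover have "is_sot3 (R, c)" using R c by (simp add: is_sot3_def)
  ultimately show ?thesis by blast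
qed

lemma se23_P_is: "is_se23 A \<Longrightarrow> is_se3 (se23_P A)"
  by (cases A) (auto simp: is_se23_def is_se3_def se23_P_def)

lemma key_prod:
  assumes "is_se3 PB" "is_se3 PA"
  shows "se3_mul (se3_mul PB PA) (se3_mul (se3_mul (se3_inv PA) T) B) = se3_mul PB (se3_mul T B)"
  using assms by (simp add: mul_assoc3 mul_inv_r)

lemma part1:
  fixes X :: "'n::finite grp"
  assumes "in_G X" "in_T \<xi>" shows "in_T (phi X \<xi>)"
proof -
  obtain A \<beta> B Q where X: "X = (A, \<beta>, B, Q)" by (cases X) auto
  obtain PB vB bB T p where xi: "\<xi> = (PB, vB, bB, T, p)" by (cases \<xi>) auto
  have A: "is_se3 (se23_P A)" and B: "is_se3 B" and Q: "\<And>i. is_sot3 (Q i)"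
    using assms(1) by (auto simp: X in_G_def se23_P_is)
  have PB: "is_se3 PB" and T: "is_se3 T" and p: "\<And>i. se3_act (se3_inv (se3_mul PB T)) (p i) \<noteq> 0"
    using assms(2) by (auto simp: xi in_T_def)
  let ?PA = "se23_P A"
  let ?M = "se3_mul PB (se3_mul T B)"
  have eq: "se3_act (se3_inv T) (se3_act (se3_inv PB) q) = se3_act (se3_inv (se3_mul PB T)) q" for q
    using PB by (simp add: inv_mul act_mul)
  have "se3_act (se3_inv (se3_mul (se3_mul PB ?PA) (se3_mul (se3_mul (se3_inv ?PA) T) B)))
      (se3_act PB (se3_act T (se3_act B (sot3_inv_act (Q i)
              (se3_act (se3_inv T) (se3_act (se3_inv PB) (p i))))))) \<noteq> 0" for i
  proof -
    have M: "is_se3 ?M" using PB T B by (simp add: is_se3_mul)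
    have "se3_act PB (se3_act T (se3_act B z)) = se3_act ?M z" for z by (simp add: act_mul)
    then show ?thesis
      using key_prod[OF PB A, of T B] act_inv_l[OF M] sot_inv_nz[OF Q p] eq by simp
  qed
  moreover have "is_se3 (se3_mul PB ?PA)" "is_se3 (se3_mul (se3_mul (se3_inv ?PA) T) B)"
    using PB A T B by (auto simp: is_se3_mul is_se3_inv)
  ultimately show ?thesis
    by (simp add: X xi phi_def in_T_def)
qed

lemma part2:
  fixes \<xi> :: "'n::finite state"
  assumes "in_T \<xi>" shows "phi G_id \<xi> = \<xi>"
proof -
  obtain PB vB bB T p where xi: "\<xi> = (PB, vB, bB, T, p)" by (cases \<xi>) auto
  have PB: "is_se3 PB" and T: "is_se3 T"
    using assms by (auto simp: xi in_T_def)
  have sid: "sot3_inv_act sot3_id y = y" for y by (simp add: sot3_inv_act_def sot3_id_def)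
  have pid: "se23_P se23_id = se3_id" "se23_v se23_id = 0"
    by (simp_all add: se23_P_def se23_v_def se23_id_def se3_id_def)
  have aid: "se3_act se3_id q = q" for q by (simp add: se3_act_def se3_id_def)
  show ?thesis
    by (simp add: xi phi_def G_id_def pid sid aid mul_id_r mul_id_l inv_id act_inv_r PB T)
qed

lemma se23_P_mul: "se23_P (se23_mul A1 A2) = se3_mul (se23_P A1) (se23_P A2)"
  by (cases A1, cases A2) (simp add: se23_P_def se23_mul_def se3_mul_def)

lemma se23_v_mul: "se23_v (se23_mul A1 A2) = se23_v A1 + fst (se23_P A1) *v se23_v A2"
  by (cases A1, cases A2) (simp add: se23_P_def se23_v_def se23_mul_def)

lemma part3:
  fixes X :: "'n::finite grp"
  assumes "in_G X" "in_G Y" "in_T \<xi>" shows "phi (G_mul X Y) \<xi> = phi Y (phi X \<xi>)"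
proof -
  obtain A1 \<beta>1 B1 Q1 where X: "X = (A1, \<beta>1, B1, Q1)" by (cases X) auto
  obtain A2 \<beta>2 B2 Q2 where Y: "Y = (A2, \<beta>2, B2, Q2)" by (cases Y) auto
  obtain PB vB bB T p where xi: "\<xi> = (PB, vB, bB, T, p)" by (cases \<xi>) auto
  have A1: "is_se3 (se23_P A1)" and B1: "is_se3 B1"
    using assms(1) by (auto simp: X in_G_def se23_P_is)
  have A2: "is_se3 (se23_P A2)" and B2: "is_se3 B2"
    using assms(2) by (auto simp: Y in_G_def se23_P_is)
  have PB: "is_se3 PB" and T: "is_se3 T"
    using assms(3) by (auto simp: xi in_T_def)
  let ?P1 = "se23_P A1" let ?P2 = "se23_P A2"
  have c1: "se3_mul PB (se3_mul ?P1 ?P2) = se3_mul (se3_mul PB ?P1) ?P2" by (simp add: mul_assoc3)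
  have c2: "vB + fst PB *v se23_v (se23_mul A1 A2) = vB + fst PB *v se23_v A1 + fst (se3_mul PB ?P1) *v se23_v A2"
    by (simp add: se23_v_mul se3_mul_def matrix_vector_mul_assoc algebra_simps)
  have c3: "se3_mul (se3_mul (se3_inv (se3_mul ?P1 ?P2)) T) (se3_mul B1 B2) =
     se3_mul (se3_mul (se3_inv ?P2) (se3_mul (se3_mul (se3_inv ?P1) T) B1)) B2"
    using A1 by (simp add: inv_mul mul_assoc3)
  let ?PB1 = "se3_mul PB ?P1" let ?T1 = "se3_mul (se3_mul (se3_inv ?P1) T) B1"
  let ?N = "se3_mul PB (se3_mul T B1)"
  have PB1: "is_se3 ?PB1" using PB A1 by (simp add: is_se3_mul)
  have N: "is_se3 ?N" using PB T B1 by (simp add: is_se3_mul)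
  have kN: "se3_mul ?PB1 ?T1 = ?N" using key_prod[OF PB A1] .
  have c4: "se3_act PB (se3_act T (se3_act (se3_mul B1 B2) (sot3_inv_act (sot3_mul (Q1 i) (Q2 i))
              (se3_act (se3_inv T) (se3_act (se3_inv PB) (p i)))))) =
     se3_act ?PB1 (se3_act ?T1 (se3_act B2 (sot3_inv_act (Q2 i)
        (se3_act (se3_inv ?T1) (se3_act (se3_inv ?PB1)
          (se3_act PB (se3_act T (se3_act B1 (sot3_inv_act (Q1 i)
              (se3_act (se3_inv T) (se3_act (se3_inv PB) (p i))))))))))))" for i
  proof -
    define y where "y = se3_act (se3_inv T) (se3_act (se3_inv PB) (p i))"
    have e1: "se3_act PB (se3_act T (se3_act B1 z)) = se3_act ?N z" for z by (simp add: act_mul)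
    have e2: "se3_act (se3_inv ?T1) (se3_act (se3_inv ?PB1) z) = se3_act (se3_inv ?N) z" for z
      using PB1 kN by (metis act_mul inv_mul)
    have e3: "se3_act ?PB1 (se3_act ?T1 (se3_act B2 z)) = se3_act ?N (se3_act B2 z)" for z
      using kN by (metis act_mul)
    show ?thesis
      unfolding y_def[symmetric] e1 e2 e3 act_inv_l[OF N]
      by (simp add: act_mul sot_inv_mul)
  qed
  show ?thesis
    by (simp add: X Y xi phi_def G_mul_def se23_P_mul c1 c2 c3 c4 del: transpose_matrix_vector)
qed

lemma part4:
  fixes \<xi> :: "'n::finite state"
  assumes "in_T \<xi>" "in_T \<xi>'" shows "\<exists>X. in_G X \<and> phi X \<xi> = \<xi>'"
proof -
  obtain PB vB bB T p where xi: "\<xi> = (PB, vB, bB, T, p)" by (cases \<xi>) auto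
  obtain PB' vB' bB' T' p' where xi': "\<xi>' = (PB', vB', bB', T', p')" by (cases \<xi>') auto
  have PB: "is_se3 PB" and T: "is_se3 T" and p: "\<And>i. se3_act (se3_inv (se3_mul PB T)) (p i) \<noteq> 0"
    using assms(1) by (auto simp: xi in_T_def)
  have PB': "is_se3 PB'" and T': "is_se3 T'" and p': "\<And>i. se3_act (se3_inv (se3_mul PB' T')) (p' i) \<noteq> 0"
    using assms(2) by (auto simp: xi' in_T_def)
  define PA where "PA = se3_mul (se3_inv PB) PB'"
  define A where "A = (fst PA, snd PA, transpose (fst PB) *v (vB' - vB))"
  define B where "B = se3_mul (se3_inv T) (se3_mul PA T')"
  have PA: "is_se3 PA" using PB PB' by (simp add: PA_def is_se3_mul is_se3_inv)
  have B: "is_se3 B" using T PA T' by (simp add: B_def is_se3_mul is_se3_inv)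
  have AP: "se23_P A = PA" "se23_v A = transpose (fst PB) *v (vB' - vB)"
    by (simp_all add: A_def se23_P_def se23_v_def)
  have "\<forall>i. \<exists>q. is_sot3 q \<and> sot3_inv_act q (se3_act (se3_inv (se3_mul PB T)) (p i))
                = se3_act (se3_inv (se3_mul PB' T')) (p' i)"
    using sot_exists p p' by blast
  then obtain Q where Q: "\<And>i. is_sot3 (Q i)" "\<And>i. sot3_inv_act (Q i) (se3_act (se3_inv (se3_mul PB T)) (p i))
                = se3_act (se3_inv (se3_mul PB' T')) (p' i)"
    by metis
  define X where "X = (A, bB' - bB, B, Q)"
  have G: "in_G X" using PA B Q by (simp add: X_def in_G_def is_se23_def A_def is_se3_def)
  have c1: "se3_mul PB PA = PB'" using PB by (simp add: PA_def mul_inv_r)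
  have c2: "vB + fst PB *v (transpose (fst PB) *v (vB' - vB)) = vB'"
    using SO3_D[of "fst PB"] PB by (simp add: is_se3_def matrix_vector_mul_assoc)
  have c3: "se3_mul (se3_mul (se3_inv PA) T) B = T'"
    using T PA by (simp add: B_def mul_assoc3 mul_inv_r mul_inv_l)
  have M: "se3_mul PB (se3_mul T B) = se3_mul PB' T'"
    using T PB by (simp add: B_def PA_def mul_assoc3 mul_inv_r)
  have MM: "is_se3 (se3_mul PB' T')" using PB' T' by (simp add: is_se3_mul)
  have c4: "se3_act PB (se3_act T (se3_act B (sot3_inv_act (Q i)
              (se3_act (se3_inv T) (se3_act (se3_inv PB) (p i)))))) = p' i" for i
  proof -
    have "se3_act (se3_inv T) (se3_act (se3_inv PB) (p i)) = se3_act (se3_inv (se3_mul PB T)) (p i)"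
      using PB by (simp add: inv_mul act_mul)
    moreover have "se3_act PB (se3_act T (se3_act B z)) = se3_act (se3_mul PB' T') z" for z
      using M by (metis act_mul)
    ultimately show ?thesis using Q(2)[of i] act_inv_r[OF MM] by simp
  qed
  have "phi X \<xi> = \<xi>'"
    by (simp add: X_def xi xi' phi_def AP c1 c2 c3 c4 del: transpose_matrix_vector)
  then show ?thesis using G by blast
qed

theorem lemma2:
  shows "(\<forall>(X::'n::finite grp) \<xi>. in_G X \<and> in_T \<xi> \<longrightarrow> in_T (phi X \<xi>))
    \<and> (\<forall>\<xi>::'n state. in_T \<xi> \<longrightarrow> phi G_id \<xi> = \<xi>)
    \<and> (\<forall>(X::'n grp) Y \<xi>. in_G X \<and> in_G Y \<and> in_T \<xi> \<longrightarrow>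
          phi (G_mul X Y) \<xi> = phi Y (phi X \<xi>))
    \<and> (\<forall>\<xi> \<xi>'::'n state. in_T \<xi> \<and> in_T \<xi>' \<longrightarrow> (\<exists>X. in_G X \<and> phi X \<xi> = \<xi>'))"
  using part1 part2 part3 part4 by blast

end
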